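(* Let $\kappa\ge1$, $n\ge1$ be integers and $0<\epsilon<1$. Let $\mathcal{C}=\{q\in\mathbb{R}^{2^\kappa}: q_i\ge0\ \forall i,\ \sum_{i=0}^{2^\kappa-1}q_i=1\}$. If $q\in\mathcal{C}$ is a local minimizer of $q\mapsto l(n,\epsilon,q)$ on $\mathcal{C}$, then $q_0=0$.
   Context: $W=\mathbb{F}_2^\kappa$; $\nu(i)\in W$ is the binary expansion of $i\in\{0,\dots,2^\kappa-1\}$; vectors $q\in\mathbb{R}^{2^\kappa}$ are indexed $q_0,\dots,q_{2^\kappa-1}$. For a subspace $S\subseteq W$, $\zeta(S,q)=\sum_{i:\nu(i)\in S}q_i$; $\Xi(W,d)$ is the set of $d$-dimensional subspaces of $W$. For real $q$, the (continuous) expected equivocation loss is $l(n,\epsilon,q)=n(1-\epsilon)-\kappa+\sum_{\delta=1}^{\kappa}K_\delta\sum_{S\in\Xi(W,\kappa-\delta)}\epsilon^{n(1-\zeta(S,q))}$, with $K_\delta=\prod_{i=1}^{\delta-1}(1-2^i)$. (When $q$ is the column-distribution vector of a $\kappa\times n$ generator matrix $G$, i.e. $q_i$ is the fraction of columns of $G$ equal to $\nu(i)$, this is the expected equivocation loss of the corresponding coset code over a binary erasure channel with erasure probability $\epsilon$.) A local minimizer of $f$ on $\mathcal{C}$ is a point $q\in\mathcal{C}$ with $f(q)\le f(q')$ for all $q'\in\mathcal{C}$ in some neighborhood of $q$. *)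

theory Defs
  imports "HOL-Analysis.Analysis"
begin

text \<open>Elements of W = F_2^kappa are represented as functions nat => bool
  (coordinate j is the j-th bit), vanishing at coordinates j >= kappa.\<close>

definition Wsp :: "nat \<Rightarrow> (nat \<Rightarrow> bool) set" where
  "Wsp \<kappa> = {v. \<forall>j. v j \<longrightarrow> j < \<kappa>}"

definition nu :: "nat \<Rightarrow> nat \<Rightarrow> (nat \<Rightarrow> bool)" where
  "nu \<kappa> i = (\<lambda>j. j < \<kappa> \<and> bit i j)"

definition vzero :: "nat \<Rightarrow> bool" where
  "vzero = (\<lambda>j. False)"

definition vadd :: "(nat \<Rightarrow> bool) \<Rightarrow> (nat \<Rightarrow> bool) \<Rightarrow> (nat \<Rightarrow> bool)" where
  "vadd u v = (\<lambda>j. u j \<noteq> v j)"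

definition vsum :: "(nat \<Rightarrow> bool) set \<Rightarrow> (nat \<Rightarrow> bool)" where
  "vsum T = (\<lambda>j. odd (card {v\<in>T. v j}))"

definition is_subspace :: "nat \<Rightarrow> (nat \<Rightarrow> bool) set \<Rightarrow> bool" where
  "is_subspace \<kappa> S \<longleftrightarrow> S \<subseteq> Wsp \<kappa> \<and> vzero \<in> S \<and> (\<forall>u\<in>S. \<forall>v\<in>S. vadd u v \<in> S)"

text \<open>Xi kappa d: the d-dimensional subspaces of W, i.e. subspaces having a basis
  B of cardinality d (every element is a unique F_2-combination of B).\<close>
definition Xi :: "nat \<Rightarrow> nat \<Rightarrow> (nat \<Rightarrow> bool) set set" where
  "Xi \<kappa> d = {S. is_subspace \<kappa> S \<and>
     (\<exists>B. B \<subseteq> S \<and> finite B \<and> card B = d \<and> bij_betw vsum (Pow B) S)}"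

definition zeta :: "nat \<Rightarrow> (nat \<Rightarrow> bool) set \<Rightarrow> (nat \<Rightarrow> real) \<Rightarrow> real" where
  "zeta \<kappa> S q = (\<Sum>i\<in>{i. i < 2^\<kappa> \<and> nu \<kappa> i \<in> S}. q i)"

definition Kc :: "nat \<Rightarrow> real" where
  "Kc \<delta> = (\<Prod>i\<in>{1..<\<delta>}. 1 - 2^i)"

definition loss :: "nat \<Rightarrow> nat \<Rightarrow> real \<Rightarrow> (nat \<Rightarrow> real) \<Rightarrow> real" where
  "loss \<kappa> n \<epsilon> q = real n * (1 - \<epsilon>) - real \<kappa> +
     (\<Sum>\<delta>\<in>{1..\<kappa>}. Kc \<delta> * (\<Sum>S\<in>Xi \<kappa> (\<kappa> - \<delta>). \<epsilon> powr (real n * (1 - zeta \<kappa> S q))))"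

text \<open>The simplex C in R^(2^kappa); vectors are functions nat => real, only the
  coordinates 0..2^kappa-1 matter.\<close>
definition simplexC :: "nat \<Rightarrow> (nat \<Rightarrow> real) set" where
  "simplexC \<kappa> = {q. (\<forall>i<2^\<kappa>. q i \<ge> 0) \<and> (\<Sum>i<2^\<kappa>. q i) = 1}"

text \<open>Local minimizer on C w.r.t. the topology of R^(2^kappa) (sup-distance on
  the coordinates 0..2^kappa-1).\<close>
definition local_min_on :: "nat \<Rightarrow> ((nat \<Rightarrow> real) \<Rightarrow> real) \<Rightarrow> (nat \<Rightarrow> real) set \<Rightarrow> (nat \<Rightarrow> real) \<Rightarrow> bool" where
  "local_min_on \<kappa> f C q \<longleftrightarrow> q \<in> C \<and>
     (\<exists>r>0. \<forall>q'\<in>C. (\<forall>i<2^\<kappa>. \<bar>q' i - q i\<bar> < r) \<longrightarrow> f q \<le> f q')"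

end

theory Submission
  imports Defs
begin


lemma vadd_comm: "vadd u v = vadd v u" unfolding vadd_def by auto
lemma vadd_assoc: "vadd (vadd u v) w = vadd u (vadd v w)" unfolding vadd_def by auto
lemma vadd_self[simp]: "vadd u u = vzero" unfolding vadd_def vzero_def by auto
lemma vadd_zero[simp]: "vadd u vzero = u" "vadd vzero u = u" unfolding vadd_def vzero_def by auto
lemma vadd_cancel: "vadd u v = vadd u w \<longleftrightarrow> v = w" unfolding vadd_def by (auto simp: fun_eq_iff)
lemma vadd_cancel2: "vadd u (vadd u w) = w" unfolding vadd_def by auto
lemma vadd_eq_zero: "vadd u v = vzero \<longleftrightarrow> u = v" unfolding vadd_def vzero_def by (auto simp: fun_eq_iff)
lemma vadd_Wsp: "u \<in> Wsp k \<Longrightarrow> v \<in> Wsp k \<Longrightarrow> vadd u v \<in> Wsp k" unfolding vadd_def Wsp_def by auto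
lemma vzero_Wsp: "vzero \<in> Wsp k" unfolding vzero_def Wsp_def by auto
lemma nu_Wsp: "nu k i \<in> Wsp k" unfolding nu_def Wsp_def by auto

lemma Wsp_img: "Wsp k = (\<lambda>A j. j \<in> A) ` Pow {..<k}"
proof
  show "Wsp k \<subseteq> (\<lambda>A j. j \<in> A) ` Pow {..<k}"
  proof
    fix v assume "v \<in> Wsp k"
    then have "v = (\<lambda>j. j \<in> {j. v j})" "{j. v j} \<in> Pow {..<k}" unfolding Wsp_def by auto
    then show "v \<in> (\<lambda>A j. j \<in> A) ` Pow {..<k}" by blast
  qed
qed (auto simp: Wsp_def)

lemma finite_Wsp: "finite (Wsp k)" unfolding Wsp_img by auto

lemma card_Wsp: "card (Wsp k) = 2 ^ k"
proof -
  have "inj_on (\<lambda>A j. j \<in> A) (Pow {..<k})"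
    by (rule inj_onI) (metis Collect_mem_eq)
  then show ?thesis unfolding Wsp_img by (simp add: card_image card_Pow)
qed

lemma subspace_Wsp: "is_subspace k (Wsp k)"
  unfolding is_subspace_def using vzero_Wsp vadd_Wsp by auto

lemma subspace_finite: "is_subspace k S \<Longrightarrow> finite S"
  unfolding is_subspace_def using finite_Wsp finite_subset by blast

lemma vsum_empty: "vsum {} = vzero" unfolding vsum_def vzero_def by auto

lemma vsum_insert: "finite C \<Longrightarrow> z \<notin> C \<Longrightarrow> vsum (insert z C) = vadd z (vsum C)"
proof -
  assume f: "finite C" and z: "z \<notin> C"
  show ?thesis unfolding vsum_def vadd_def
  proof
    fix j
    show "odd (card {v \<in> insert z C. v j}) = (z j \<noteq> odd (card {v \<in> C. v j}))"
    proof (cases "z j")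
      case True
      then have "{v \<in> insert z C. v j} = insert z {v \<in> C. v j}" by auto
      then show ?thesis using True f z by simp
    next
      case False
      then have "{v \<in> insert z C. v j} = {v \<in> C. v j}" by auto
      then show ?thesis using False by simp
    qed
  qed
qed

definition extv :: "(nat \<Rightarrow> bool) set \<Rightarrow> (nat \<Rightarrow> bool) \<Rightarrow> (nat \<Rightarrow> bool) set" where
  "extv T z = T \<union> vadd z ` T"

lemma extv_subspace:
  assumes T: "is_subspace k T" and z: "z \<in> Wsp k" "z \<notin> T"
  shows "is_subspace k (extv T z)" "card (extv T z) = 2 * card T" "T \<subseteq> extv T z" "z \<in> extv T z"
proof -
  have TW: "T \<subseteq> Wsp k" and T0: "vzero \<in> T" and Tc: "\<And>u v. u\<in>T \<Longrightarrow> v\<in>T \<Longrightarrow> vadd u v \<in> T"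
    using T unfolding is_subspace_def by auto
  show "is_subspace k (extv T z)" unfolding is_subspace_def extv_def
  proof (intro conjI ballI)
    show "T \<union> vadd z ` T \<subseteq> Wsp k" using TW z vadd_Wsp by auto
    show "vzero \<in> T \<union> vadd z ` T" using T0 by auto
    fix u v assume u: "u \<in> T \<union> vadd z ` T" and v: "v \<in> T \<union> vadd z ` T"
    show "vadd u v \<in> T \<union> vadd z ` T"
    proof -
      { fix a b assume a: "a \<in> T" and b: "b \<in> T"
        have "vadd a (vadd z b) = vadd z (vadd a b)" "vadd (vadd z a) b = vadd z (vadd a b)"
             "vadd (vadd z a) (vadd z b) = vadd a b"
          unfolding vadd_def by auto
        then have "vadd a b \<in> T" "vadd a (vadd z b) \<in> vadd z ` T" "vadd (vadd z a) b \<in> vadd z ` T"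
            "vadd (vadd z a) (vadd z b) \<in> T" using Tc a b by auto }
      then show ?thesis using u v by auto
    qed
  qed
  have fin: "finite T" using T subspace_finite by blast
  have disj: "T \<inter> vadd z ` T = {}"
  proof (rule ccontr)
    assume "T \<inter> vadd z ` T \<noteq> {}"
    then obtain a b where "a \<in> T" "b \<in> T" "a = vadd z b" by auto
    then have "z = vadd a b" unfolding vadd_def by auto
    then show False using Tc \<open>a\<in>T\<close> \<open>b\<in>T\<close> z by auto
  qed
  have "inj_on (vadd z) T" by (rule inj_onI) (simp add: vadd_cancel)
  then have "card (vadd z ` T) = card T" by (simp add: card_image)
  then show "card (extv T z) = 2 * card T" unfolding extv_def
    using card_Un_disjoint[OF fin _ disj] fin by simp
  show "T \<subseteq> extv T z" unfolding extv_def by auto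
  show "z \<in> extv T z" unfolding extv_def using T0 by (metis UnI2 image_eqI vadd_zero(1))
qed

definition based :: "(nat \<Rightarrow> bool) set \<Rightarrow> bool" where
  "based S \<longleftrightarrow> (\<exists>B. B \<subseteq> S \<and> finite B \<and> bij_betw vsum (Pow B) S)"

lemma extv_based:
  assumes T: "is_subspace k T" and z: "z \<in> Wsp k" "z \<notin> T" and b: "based T"
  shows "based (extv T z)"
proof -
  obtain B where B: "B \<subseteq> T" "finite B" "bij_betw vsum (Pow B) T" using b based_def by auto
  have zB: "z \<notin> B" using B z by auto
  have fT: "finite T" using T subspace_finite by blast
  have img: "vsum ` Pow (insert z B) = extv T z"
  proof -
    have "vsum ` (insert z ` Pow B) = vadd z ` vsum ` Pow B"
    proof -
      have "\<And>C. C \<in> Pow B \<Longrightarrow> vsum (insert z C) = vadd z (vsum C)"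
        using vsum_insert B zB by (meson PowD finite_subset subsetD)
      then show ?thesis by (auto simp: image_image image_iff)
    qed
    then show ?thesis using B(3) unfolding Pow_insert extv_def bij_betw_def by (simp add: image_Un)
  qed
  have cB: "card (Pow B) = card T" using B(3) bij_betw_same_card by blast
  have "card (Pow (insert z B)) = 2 * card (Pow B)" using B(2) zB by (simp add: card_Pow)
  also have "\<dots> = card (extv T z)" using extv_subspace[OF T z] cB by simp
  finally have "card (vsum ` Pow (insert z B)) = card (Pow (insert z B))" using img by simp
  then have "inj_on vsum (Pow (insert z B))" using B(2) by (simp add: eq_card_imp_inj_on)
  then have "bij_betw vsum (Pow (insert z B)) (extv T z)" using img bij_betw_def by blast
  moreover have "insert z B \<subseteq> extv T z" using B(1) extv_subspace(3,4)[OF T z] by auto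
  ultimately show ?thesis unfolding based_def using B(2) by blast
qed

lemma subspace_based:
  assumes S: "is_subspace k S" shows "based S"
proof -
  let ?M = "{T. T \<subseteq> S \<and> is_subspace k T \<and> based T}"
  have fS: "finite S" using S subspace_finite by blast
  have finM: "finite ?M" by (rule finite_subset[of _ "Pow S"]) (use fS in auto)
  have z: "{vzero} \<in> ?M"
  proof -
    have "bij_betw vsum (Pow {}) {vzero}" by (simp add: bij_betw_def vsum_empty)
    then have "based {vzero}" unfolding based_def by blast
    moreover have "is_subspace k {vzero}" unfolding is_subspace_def using vzero_Wsp by auto
    ultimately show ?thesis using S unfolding is_subspace_def by auto
  qed
  define m where "m = Max (card ` ?M)"
  have "m \<in> card ` ?M" unfolding m_def using finM z by (intro Max_in) auto
  then obtain T where T: "T \<in> ?M" and Tm: "card T = m" by auto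
  have mx: "\<And>T'. T' \<in> ?M \<Longrightarrow> card T' \<le> card T"
    using Tm finM unfolding m_def by (simp add: Max_ge)
  show ?thesis
  proof (cases "T = S")
    case True then show ?thesis using T by auto
  next
    case False
    then obtain w where w: "w \<in> S" "w \<notin> T" using T by auto
    have TS: "is_subspace k T" "T \<subseteq> S" "based T" using T by auto
    have wW: "w \<in> Wsp k" using w S unfolding is_subspace_def by auto
    have "extv T w \<subseteq> S" unfolding extv_def using TS(2) w S unfolding is_subspace_def by auto
    then have "extv T w \<in> ?M" using extv_subspace[OF TS(1) wW w(2)] extv_based[OF TS(1) wW w(2) TS(3)] by auto
    then have "card (extv T w) \<le> card T" using mx by blast
    moreover have "card T > 0" using TS(1) subspace_finite unfolding is_subspace_def
      by (metis card_gt_0_iff empty_iff)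
    ultimately show ?thesis using extv_subspace(2)[OF TS(1) wW w(2)] by simp
  qed
qed



definition sdim :: "(nat \<Rightarrow> bool) set \<Rightarrow> nat" where
  "sdim S = (THE d. card S = 2 ^ d)"

lemma sdim_eq: "card S = 2 ^ d \<Longrightarrow> sdim S = d"
  unfolding sdim_def by (rule the_equality) (auto dest: power_inject_exp[THEN iffD1, rotated])

lemma based_card: "based S \<Longrightarrow> \<exists>d. card S = 2 ^ d"
  unfolding based_def by (metis bij_betw_same_card card_Pow)

lemma subspace_card: "is_subspace k S \<Longrightarrow> card S = 2 ^ sdim S"
  using based_card[OF subspace_based] sdim_eq by metis

lemma subspace_sdim_le: "is_subspace k S \<Longrightarrow> sdim S \<le> k"
proof -
  assume S: "is_subspace k S"
  have "card S \<le> card (Wsp k)" using S finite_Wsp unfolding is_subspace_def by (simp add: card_mono)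
  then have "(2::nat) ^ sdim S \<le> 2 ^ k" using subspace_card[OF S] card_Wsp by simp
  then show ?thesis by simp
qed

lemma subspace_sdim_eq: "is_subspace k S \<Longrightarrow> sdim S = k \<longleftrightarrow> S = Wsp k"
proof -
  assume S: "is_subspace k S"
  show ?thesis
  proof
    assume "sdim S = k"
    then have "card S = card (Wsp k)" using subspace_card[OF S] card_Wsp by simp
    then show "S = Wsp k" using S finite_Wsp unfolding is_subspace_def by (simp add: card_subset_eq)
  next
    assume "S = Wsp k" then show "sdim S = k" using card_Wsp sdim_eq by simp
  qed
qed

lemma Xi_char: "Xi k d = {S. is_subspace k S \<and> card S = 2 ^ d}"
proof safe
  fix S assume "S \<in> Xi k d"
  then show "is_subspace k S" "card S = 2 ^ d" unfolding Xi_def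
    by (auto dest: bij_betw_same_card simp: card_Pow)
next
  fix S assume S: "is_subspace k S" "card S = 2 ^ d"
  obtain B where B: "B \<subseteq> S" "finite B" "bij_betw vsum (Pow B) S"
    using subspace_based[OF S(1)] based_def by auto
  have "card B = d" using B S(2) by (metis bij_betw_same_card card_Pow power_inject_exp one_less_numeral_iff semiring_norm(76))
  then show "S \<in> Xi k d" unfolding Xi_def using S B by auto
qed

definition PS :: "nat \<Rightarrow> (nat \<Rightarrow> bool) set set" where
  "PS k = {S. is_subspace k S \<and> S \<noteq> Wsp k}"

lemma finite_subspaces: "finite {S. is_subspace k S \<and> P S}"
  by (rule finite_subset[of _ "Pow (Wsp k)"]) (auto simp: is_subspace_def finite_Wsp)

lemma finite_PS: "finite (PS k)" unfolding PS_def by (rule finite_subspaces)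

lemma G_lemma:
  "(\<Sum>\<delta>\<in>{1..k}. Kc \<delta> * (\<Sum>S\<in>Xi k (k - \<delta>). h S)) = (\<Sum>S\<in>PS k. Kc (k - sdim S) * h S)"
proof -
  have "(\<Sum>\<delta>\<in>{1..k}. Kc \<delta> * (\<Sum>S\<in>Xi k (k - \<delta>). h S))
      = (\<Sum>\<delta>\<in>{1..k}. (\<Sum>S\<in>Xi k (k - \<delta>). Kc (k - sdim S) * h S))"
  proof (rule sum.cong[OF refl])
    fix \<delta> assume d: "\<delta> \<in> {1..k}"
    have "\<And>S. S \<in> Xi k (k - \<delta>) \<Longrightarrow> k - sdim S = \<delta>"
      using d by (auto simp: Xi_char sdim_eq)
    then show "Kc \<delta> * (\<Sum>S\<in>Xi k (k - \<delta>). h S) = (\<Sum>S\<in>Xi k (k - \<delta>). Kc (k - sdim S) * h S)"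
      by (simp add: sum_distrib_left)
  qed
  also have "\<dots> = (\<Sum>S\<in>(\<Union>\<delta>\<in>{1..k}. Xi k (k - \<delta>)). Kc (k - sdim S) * h S)"
  proof (rule sum.UNION_disjoint[symmetric])
    show "finite {1..k}" by simp
    show "\<forall>i\<in>{1..k}. finite (Xi k (k - i))" unfolding Xi_char by (auto intro: finite_subspaces)
    show "\<forall>i\<in>{1..k}. \<forall>j\<in>{1..k}. i \<noteq> j \<longrightarrow> Xi k (k - i) \<inter> Xi k (k - j) = {}"
      unfolding Xi_char by auto
  qed
  also have "(\<Union>\<delta>\<in>{1..k}. Xi k (k - \<delta>)) = PS k"
  proof safe
    fix S \<delta> assume "\<delta> \<in> {1..k}" "S \<in> Xi k (k - \<delta>)"
    then show "S \<in> PS k" unfolding PS_def Xi_char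
      using subspace_sdim_eq sdim_eq by fastforce
  next
    fix S assume "S \<in> PS k"
    then have S: "is_subspace k S" "S \<noteq> Wsp k" unfolding PS_def by auto
    then have "sdim S < k" using subspace_sdim_le subspace_sdim_eq by (meson le_neq_implies_less)
    then have "k - sdim S \<in> {1..k}" "k - (k - sdim S) = sdim S" by auto
    then show "S \<in> (\<Union>\<delta>\<in>{1..k}. Xi k (k - \<delta>))" unfolding Xi_char
      using S subspace_card by (metis (mono_tags, lifting) UN_iff mem_Collect_eq)
  qed
  finally show ?thesis .
qed



definition ssum :: "(nat \<Rightarrow> bool) set \<Rightarrow> (nat \<Rightarrow> bool) set \<Rightarrow> (nat \<Rightarrow> bool) set" where
  "ssum T V = (\<lambda>(t, a). vadd t a) ` (T \<times> V)"

lemma Kc_Suc: "k \<ge> 1 \<Longrightarrow> Kc (Suc k) = Kc k * (1 - 2 ^ k)"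
proof -
  assume k: "k \<ge> 1"
  then have "{1..<Suc k} = insert k {1..<k}" by auto
  then show ?thesis unfolding Kc_def by (simp add: mult.commute)
qed

lemma card_ssum:
  assumes T: "is_subspace k T" and V: "is_subspace k V" and TV: "T \<inter> V = {vzero}"
  shows "card (ssum T V) = card T * card V"
proof -
  have "inj_on (\<lambda>(t, a). vadd t a) (T \<times> V)"
  proof (rule inj_onI, clarify)
    fix t a t' a' assume h: "t \<in> T" "a \<in> V" "t' \<in> T" "a' \<in> V" "vadd t a = vadd t' a'"
    have "vadd t t' = vadd a a'" using h(5) unfolding vadd_def by (auto simp: fun_eq_iff)
    moreover have "vadd t t' \<in> T" "vadd a a' \<in> V" using h T V unfolding is_subspace_def by auto
    ultimately have "vadd t t' = vzero" "vadd a a' = vzero" using TV by auto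
    then show "t = t' \<and> a = a'" by (simp add: vadd_eq_zero)
  qed
  then show ?thesis unfolding ssum_def
    using subspace_finite[OF T] subspace_finite[OF V] by (simp add: card_image card_cartesian_product)
qed

definition FF :: "nat \<Rightarrow> (nat \<Rightarrow> bool) set \<Rightarrow> (nat \<Rightarrow> bool) set \<Rightarrow> (nat \<Rightarrow> bool) set set" where
  "FF k T V = {S. is_subspace k S \<and> T \<subseteq> S \<and> S \<inter> V = {vzero}}"

lemma J_lemma:
  "\<And>T V d. m = k - sdim T - d \<Longrightarrow> is_subspace k T \<Longrightarrow> is_subspace k V \<Longrightarrow> T \<inter> V = {vzero}
     \<Longrightarrow> card V = 2 ^ d \<Longrightarrow> d \<ge> 1 \<Longrightarrow> (\<Sum>S\<in>FF k T V. Kc (k - sdim S)) = Kc d"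
proof (induction m rule: less_induct)
  case (less m T V d)
  note T = less.prems(2) and V = less.prems(3) and TV = less.prems(4)
  have TW: "T \<subseteq> Wsp k" and T0: "vzero \<in> T" and Tc: "\<And>u v. u\<in>T \<Longrightarrow> v\<in>T \<Longrightarrow> vadd u v \<in> T"
    using T unfolding is_subspace_def by auto
  have VW: "V \<subseteq> Wsp k" and V0: "vzero \<in> V" and Vc: "\<And>u v. u\<in>V \<Longrightarrow> v\<in>V \<Longrightarrow> vadd u v \<in> V"
    using V unfolding is_subspace_def by auto
  have cs: "card (ssum T V) = 2 ^ (sdim T + d)"
    using card_ssum[OF T V TV] subspace_card[OF T] less.prems(5) by (simp add: power_add)
  have sW: "ssum T V \<subseteq> Wsp k" unfolding ssum_def using TW VW vadd_Wsp by (auto intro!: vadd_Wsp)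
  have Tss: "T \<subseteq> ssum T V" unfolding ssum_def using V0 by force
  show ?case
  proof (cases "ssum T V = Wsp k")
    case True
    then have "2 ^ (sdim T + d) = (2::nat) ^ k" using cs card_Wsp by simp
    then have kd: "k - sdim T = d" by simp
    have "FF k T V = {T}"
    proof (rule equalityI; rule subsetI)
      fix S assume S: "S \<in> FF k T V"
      then have S': "is_subspace k S" "T \<subseteq> S" "S \<inter> V = {vzero}" unfolding FF_def by auto
      have "S \<subseteq> T"
      proof
        fix s assume s: "s \<in> S"
        then have "s \<in> ssum T V" using True S' unfolding is_subspace_def by auto
        then obtain t a where ta: "t \<in> T" "a \<in> V" "s = vadd t a" unfolding ssum_def by auto
        then have "a = vadd t s" unfolding vadd_def by auto
        then have "a \<in> S" using S' s ta unfolding is_subspace_def by (metis subsetD)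
        then have "a = vzero" using S' ta by auto
        then show "s \<in> T" using ta by simp
      qed
      then show "S \<in> {T}" using S' by auto
    next
      fix S assume "S \<in> {T}"
      then show "S \<in> FF k T V" unfolding FF_def using T TV by auto
    qed
    then show ?thesis using kd by simp
  next
    case False
    then obtain w where w: "w \<in> Wsp k" "w \<notin> ssum T V" using sW by auto
    have "card (ssum T V) < card (Wsp k)" using sW False finite_Wsp by (simp add: psubset_card_mono)
    then have "(2::nat) ^ (sdim T + d) < 2 ^ k" using cs card_Wsp by simp
    then have lt: "sdim T + d < k" by simp
    have wV: "w \<notin> V" using w unfolding ssum_def using T0 by (metis SigmaI image_eqI prod.case vadd_zero(2))
    have wsum: "\<And>t a. t \<in> T \<Longrightarrow> a \<in> V \<Longrightarrow> w \<noteq> vadd t a" using w unfolding ssum_def by auto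
    define V' where "V' = extv V w"
    have V'sub: "is_subspace k V'" and cV': "card V' = 2 ^ Suc d" and VV': "V \<subseteq> V'" and wV': "w \<in> V'"
      using extv_subspace[OF V w(1) wV] less.prems(5) unfolding V'_def by auto
    have TV': "T \<inter> V' = {vzero}"
    proof -
      have "T \<inter> vadd w ` V = {}"
      proof (rule ccontr)
        assume "T \<inter> vadd w ` V \<noteq> {}"
        then obtain t a where "t \<in> T" "a \<in> V" "t = vadd w a" by auto
        then show False using wsum[of t a] by (simp add: vadd_assoc)
      qed
      then show ?thesis using TV unfolding V'_def extv_def by auto
    qed
    have IH1: "(\<Sum>S\<in>FF k T V'. Kc (k - sdim S)) = Kc (Suc d)"
    proof -
      have lt1: "k - sdim T - Suc d < m" using lt less.prems(1) by linarith
      show ?thesis by (rule less.IH[OF lt1 refl T V'sub TV' cV']) simp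
    qed
    define Ta where "Ta a = extv T (vadd w a)" for a
    have wa: "\<And>a. a \<in> V \<Longrightarrow> vadd w a \<in> Wsp k \<and> vadd w a \<notin> T"
    proof
      fix a assume a: "a \<in> V"
      show "vadd w a \<in> Wsp k" using a VW w vadd_Wsp by auto
      show "vadd w a \<notin> T"
      proof
        assume "vadd w a \<in> T"
        then show False using wsum[of "vadd w a" a] a by (simp add: vadd_assoc)
      qed
    qed
    have Tasub: "\<And>a. a \<in> V \<Longrightarrow> is_subspace k (Ta a) \<and> card (Ta a) = 2 * card T \<and> T \<subseteq> Ta a \<and> vadd w a \<in> Ta a"
    proof -
      fix a assume a: "a \<in> V"
      have h: "vadd w a \<in> Wsp k" "vadd w a \<notin> T" using wa[OF a] by auto
      show "is_subspace k (Ta a) \<and> card (Ta a) = 2 * card T \<and> T \<subseteq> Ta a \<and> vadd w a \<in> Ta a"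
        using extv_subspace[OF T h] unfolding Ta_def by blast
    qed
    have TaV: "\<And>a. a \<in> V \<Longrightarrow> Ta a \<inter> V = {vzero}"
    proof -
      fix a assume a: "a \<in> V"
      have "vadd (vadd w a) ` T \<inter> V = {}"
      proof (rule ccontr)
        assume "vadd (vadd w a) ` T \<inter> V \<noteq> {}"
        then obtain t b where tb: "t \<in> T" "b \<in> V" "vadd (vadd w a) t = b" by auto
        then have "w = vadd t (vadd a b)" unfolding vadd_def by (auto simp: fun_eq_iff)
        then show False using wsum tb a Vc by blast
      qed
      then show "Ta a \<inter> V = {vzero}" using TV unfolding Ta_def extv_def by auto
    qed
    have IH2: "\<And>a. a \<in> V \<Longrightarrow> (\<Sum>S\<in>FF k (Ta a) V. Kc (k - sdim S)) = Kc d"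
    proof -
      fix a assume a: "a \<in> V"
      have sd: "sdim (Ta a) = Suc (sdim T)"
      proof (rule sdim_eq)
        show "card (Ta a) = 2 ^ Suc (sdim T)" using Tasub[OF a] subspace_card[OF T] by simp
      qed
      have lt2: "k - sdim (Ta a) - d < m" using lt less.prems(1) sd by linarith
      show "(\<Sum>S\<in>FF k (Ta a) V. Kc (k - sdim S)) = Kc d"
        by (rule less.IH[OF lt2 refl conjunct1[OF Tasub[OF a]] V TaV[OF a] less.prems(5,6)])
    qed
    have part: "FF k T V = FF k T V' \<union> (\<Union>a\<in>V. FF k (Ta a) V)"
    proof (rule equalityI; rule subsetI)
      fix S assume S0: "S \<in> FF k T V"
      show "S \<in> FF k T V' \<union> (\<Union>a\<in>V. FF k (Ta a) V)"
      proof (cases "S \<in> FF k T V'")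
        case True then show ?thesis by blast
      next
        case False
        have S': "is_subspace k S" "T \<subseteq> S" "S \<inter> V = {vzero}" using S0 unfolding FF_def by auto
        have "vzero \<in> S \<inter> V'" using S' VV' V0 by auto
        then obtain s where s: "s \<in> S" "s \<in> V'" "s \<noteq> vzero" using False S' unfolding FF_def by blast
        then have "s \<notin> V" using S' by auto
        then obtain a where a: "a \<in> V" "s = vadd w a" using s unfolding V'_def extv_def by auto
        have "Ta a \<subseteq> S" unfolding Ta_def extv_def using S' s a unfolding is_subspace_def by auto
        then have "S \<in> FF k (Ta a) V" using a S' unfolding FF_def by auto
        then show ?thesis using a by blast
      qed
    next
      fix S assume "S \<in> FF k T V' \<union> (\<Union>a\<in>V. FF k (Ta a) V)"
      then show "S \<in> FF k T V"
      proof
        assume "S \<in> FF k T V'" then show "S \<in> FF k T V" unfolding FF_def using VV' V0 by auto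
      next
        assume "S \<in> (\<Union>a\<in>V. FF k (Ta a) V)"
        then obtain a where "a \<in> V" "S \<in> FF k (Ta a) V" by auto
        then show "S \<in> FF k T V" unfolding FF_def using Tasub by blast
      qed
    qed
    have fin: "\<And>A V. finite (FF k A V)" unfolding FF_def by (rule finite_subspaces)
    have d1: "FF k T V' \<inter> (\<Union>a\<in>V. FF k (Ta a) V) = {}"
    proof safe
      fix S a assume S: "S \<in> FF k T V'" "a \<in> V" "S \<in> FF k (Ta a) V"
      then have "vadd w a \<in> S" using Tasub unfolding FF_def by blast
      moreover have "vadd w a \<in> V'" unfolding V'_def extv_def using S(2) by auto
      moreover have "vadd w a \<noteq> vzero" using wV S(2) by (auto simp: vadd_eq_zero)
      ultimately show "S \<in> {}" using S(1) unfolding FF_def by auto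
    qed
    have d2: "\<forall>a\<in>V. \<forall>b\<in>V. a \<noteq> b \<longrightarrow> FF k (Ta a) V \<inter> FF k (Ta b) V = {}"
    proof (intro ballI impI)
      fix a b assume ab: "a \<in> V" "b \<in> V" "a \<noteq> b"
      show "FF k (Ta a) V \<inter> FF k (Ta b) V = {}"
      proof safe
        fix S assume S: "S \<in> FF k (Ta a) V" "S \<in> FF k (Ta b) V"
        then have "vadd w a \<in> S" "vadd w b \<in> S" "is_subspace k S" "S \<inter> V = {vzero}"
          using Tasub ab unfolding FF_def by blast+
        then have "vadd (vadd w a) (vadd w b) \<in> S" unfolding is_subspace_def by auto
        moreover have "vadd (vadd w a) (vadd w b) = vadd a b" unfolding vadd_def by auto
        ultimately have "vadd a b \<in> S \<inter> V" using Vc ab by auto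
        then have "vadd a b = vzero" using \<open>S \<inter> V = {vzero}\<close> by auto
        then show "S \<in> {}" using ab by (simp add: vadd_eq_zero)
      qed
    qed
    have "(\<Sum>S\<in>FF k T V. Kc (k - sdim S)) = Kc (Suc d) + (\<Sum>a\<in>V. Kc d)"
      unfolding part
      apply (subst sum.union_disjoint)
      using fin d1 subspace_finite[OF V] apply (simp, blast, simp)
      apply (subst sum.UNION_disjoint)
      using fin d2 subspace_finite[OF V] apply (simp, simp, blast)
      using IH1 IH2 by simp
    also have "\<dots> = Kc d"
      using Kc_Suc[OF less.prems(6)] less.prems(5) by (simp add: algebra_simps)
    finally show ?thesis .
  qed
qed



lemma J1:
  assumes T: "is_subspace k T" and v: "v \<in> Wsp k" "v \<noteq> vzero" "v \<notin> T"
  shows "(\<Sum>S\<in>{S. is_subspace k S \<and> T \<subseteq> S \<and> v \<notin> S}. Kc (k - sdim S)) = 1"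
proof -
  let ?V = "{vzero, v}"
  have V: "is_subspace k ?V" unfolding is_subspace_def using v vzero_Wsp by auto
  have TV: "T \<inter> ?V = {vzero}" using T v unfolding is_subspace_def by auto
  have cV: "card ?V = 2 ^ 1" using v by simp
  have eq: "FF k T ?V = {S. is_subspace k S \<and> T \<subseteq> S \<and> v \<notin> S}"
    unfolding FF_def is_subspace_def using v(2) by auto
  have "(\<Sum>S\<in>FF k T ?V. Kc (k - sdim S)) = Kc 1"
    by (rule J_lemma[OF refl T V TV cV]) simp
  then show ?thesis using eq by (simp add: Kc_def)
qed

definition innerc :: "nat \<Rightarrow> (nat \<Rightarrow> bool) \<Rightarrow> (nat \<Rightarrow> bool) set \<Rightarrow> real" where
  "innerc k v X = (\<Sum>S\<in>{S\<in>PS k. X \<subseteq> S \<and> v \<notin> S}. Kc (k - sdim S))"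

lemma innerc_nonneg:
  assumes X: "X \<subseteq> Wsp k" and v: "v \<in> Wsp k" "v \<noteq> vzero"
  shows "innerc k v X \<ge> 0"
proof -
  define T where "T = \<Inter>{S. is_subspace k S \<and> X \<subseteq> S}"
  have TW: "T \<subseteq> Wsp k" unfolding T_def using subspace_Wsp X by auto
  have Tsub: "is_subspace k T" unfolding is_subspace_def
  proof (intro conjI TW ballI)
    show "vzero \<in> T" unfolding T_def is_subspace_def by auto
    fix a b assume "a \<in> T" "b \<in> T" then show "vadd a b \<in> T" unfolding T_def is_subspace_def by auto
  qed
  have iff: "\<And>S. is_subspace k S \<Longrightarrow> X \<subseteq> S \<longleftrightarrow> T \<subseteq> S"
  proof -
    fix S assume S: "is_subspace k S"
    have "X \<subseteq> T" unfolding T_def by auto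
    then show "X \<subseteq> S \<longleftrightarrow> T \<subseteq> S" using S unfolding T_def by auto
  qed
  show ?thesis
  proof (cases "v \<in> T")
    case True
    have E: "{S\<in>PS k. X \<subseteq> S \<and> v \<notin> S} = {}"
    proof (rule ccontr)
      assume "{S\<in>PS k. X \<subseteq> S \<and> v \<notin> S} \<noteq> {}"
      then obtain S where "S \<in> PS k" "X \<subseteq> S" "v \<notin> S" by blast
      then show False using iff[of S] True unfolding PS_def by auto
    qed
    show ?thesis unfolding innerc_def E by simp
  next
    case False
    have "{S\<in>PS k. X \<subseteq> S \<and> v \<notin> S} = {S. is_subspace k S \<and> T \<subseteq> S \<and> v \<notin> S}"
      using iff v unfolding PS_def by auto
    then show ?thesis unfolding innerc_def using J1[OF Tsub v False] by simp
  qed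
qed

lemma innerc_empty:
  assumes v: "v \<in> Wsp k" "v \<noteq> vzero"
  shows "innerc k v {} = 1"
proof -
  have T: "is_subspace k {vzero}" unfolding is_subspace_def using vzero_Wsp by auto
  have "{S\<in>PS k. {} \<subseteq> S \<and> v \<notin> S} = {S. is_subspace k S \<and> {vzero} \<subseteq> S \<and> v \<notin> S}"
    using v unfolding PS_def is_subspace_def by auto
  then show ?thesis unfolding innerc_def using J1[OF T v] v by simp
qed

lemma positivity:
  fixes x :: "nat \<Rightarrow> real" and f :: "(nat \<Rightarrow> bool) set \<Rightarrow> real"
  assumes v: "v \<in> Wsp k" "v \<noteq> vzero"
    and x: "\<And>i. i \<in> I \<Longrightarrow> 0 < x i \<and> x i \<le> 1" and I: "finite I"
    and nuW: "\<And>i. nu k i \<in> Wsp k"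
    and f: "\<And>S. f S = (\<Sum>U\<in>Pow I. if nu k ` U \<subseteq> S then (\<Prod>i\<in>U. 1 - x i) * (\<Prod>i\<in>I - U. x i) else 0)"
  shows "(\<Sum>S\<in>PS k. Kc (k - sdim S) * (if v \<notin> S then f S else 0)) > 0"
proof -
  define wt where "wt U = (\<Prod>i\<in>U. 1 - x i) * (\<Prod>i\<in>I - U. x i)" for U
  have "(\<Sum>S\<in>PS k. Kc (k - sdim S) * (if v \<notin> S then f S else 0))
     = (\<Sum>S\<in>PS k. \<Sum>U\<in>Pow I. if nu k ` U \<subseteq> S \<and> v \<notin> S then Kc (k - sdim S) * wt U else 0)"
    unfolding f wt_def by (auto simp: sum_distrib_left intro!: sum.cong)
  also have "\<dots> = (\<Sum>U\<in>Pow I. \<Sum>S\<in>PS k. if nu k ` U \<subseteq> S \<and> v \<notin> S then Kc (k - sdim S) * wt U else 0)"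
    by (rule sum.swap)
  also have "\<dots> = (\<Sum>U\<in>Pow I. wt U * innerc k v (nu k ` U))"
  proof (rule sum.cong[OF refl])
    fix U
    have "(\<Sum>S\<in>PS k. if nu k ` U \<subseteq> S \<and> v \<notin> S then Kc (k - sdim S) * wt U else 0)
        = (\<Sum>S\<in>{S\<in>PS k. nu k ` U \<subseteq> S \<and> v \<notin> S}. Kc (k - sdim S) * wt U)"
      by (rule sum.inter_filter[symmetric]) (rule finite_PS)
    then show "(\<Sum>S\<in>PS k. if nu k ` U \<subseteq> S \<and> v \<notin> S then Kc (k - sdim S) * wt U else 0)
        = wt U * innerc k v (nu k ` U)"
      unfolding innerc_def by (simp add: sum_distrib_left sum_distrib_right mult.commute)
  qed
  also have "\<dots> \<ge> wt {} * innerc k v (nu k ` {})"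
  proof (rule member_le_sum)
    show "{} \<in> Pow I" by simp
    show "finite (Pow I)" using I by simp
    fix U assume U: "U \<in> Pow I - {{}}"
    have x': "\<And>i. i \<in> I \<Longrightarrow> 0 \<le> x i \<and> x i \<le> 1" using x by (meson less_imp_le)
    have "wt U \<ge> 0" unfolding wt_def using x' U
      by (intro mult_nonneg_nonneg prod_nonneg) auto
    moreover have "innerc k v (nu k ` U) \<ge> 0" using innerc_nonneg[OF _ v] nuW by (simp add: image_subset_iff)
    ultimately show "0 \<le> wt U * innerc k v (nu k ` U)" by simp
  qed
  finally have ge: "wt {} * innerc k v (nu k ` {}) \<le> (\<Sum>S\<in>PS k. Kc (k - sdim S) * (if v \<notin> S then f S else 0))" .
  have "wt {} > 0" unfolding wt_def using x by (simp add: prod_pos)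
  then show ?thesis using ge innerc_empty[OF v] by simp
qed



lemma fexpand:
  fixes q :: "nat \<Rightarrow> real"
  assumes q: "q \<in> simplexC k" and e: "0 < \<epsilon>"
  shows "\<epsilon> powr (real n * (1 - zeta k S q)) =
    (\<Sum>U\<in>Pow {..<2^k}. if nu k ` U \<subseteq> S then (\<Prod>i\<in>U. 1 - \<epsilon> powr (real n * q i)) * (\<Prod>i\<in>{..<2^k} - U. \<epsilon> powr (real n * q i)) else 0)"
proof -
  define I :: "nat set" where "I = {..<2^k}"
  define S' where "S' = {i. i < 2^k \<and> nu k i \<in> S}"
  define x where "x i = \<epsilon> powr (real n * q i)" for i
  have SI: "S' \<subseteq> I" and fI: "finite I" unfolding S'_def I_def by auto
  have fS: "finite S'" using SI fI finite_subset by blast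
  have s1: "sum q I = 1" using q unfolding simplexC_def I_def by auto
  have "sum q I = sum q (I - S') + sum q S'" using sum.subset_diff[OF SI fI] .
  then have z: "1 - zeta k S q = sum q (I - S')" unfolding zeta_def S'_def[symmetric] using s1 by simp
  have "\<epsilon> powr (real n * (1 - zeta k S q)) = \<epsilon> powr (\<Sum>i\<in>I - S'. real n * q i)"
    unfolding z by (simp add: sum_distrib_left)
  also have "\<dots> = (\<Prod>i\<in>I - S'. x i)" unfolding x_def using e by (simp add: powr_sum)
  also have "\<dots> = (\<Prod>i\<in>I - S'. x i) * (\<Prod>i\<in>S'. (1 - x i) + x i)" by simp
  also have "\<dots> = (\<Prod>i\<in>I - S'. x i) * (\<Sum>U\<in>Pow S'. (\<Prod>i\<in>U. 1 - x i) * (\<Prod>i\<in>S' - U. x i))"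
    by (simp only: prod_add[OF fS])
  also have "\<dots> = (\<Sum>U\<in>Pow S'. (\<Prod>i\<in>U. 1 - x i) * (\<Prod>i\<in>I - U. x i))"
  proof -
    have "\<And>U. U \<in> Pow S' \<Longrightarrow> (\<Prod>i\<in>I - S'. x i) * (\<Prod>i\<in>S' - U. x i) = (\<Prod>i\<in>I - U. x i)"
    proof -
      fix U assume U: "U \<in> Pow S'"
      have "I - U = (S' - U) \<union> (I - S')" using U SI by auto
      moreover have "(S' - U) \<inter> (I - S') = {}" by auto
      ultimately show "(\<Prod>i\<in>I - S'. x i) * (\<Prod>i\<in>S' - U. x i) = (\<Prod>i\<in>I - U. x i)"
        using fI fS by (simp add: prod.union_disjoint mult.commute)
    qed
    then have "\<And>U. U \<in> Pow S' \<Longrightarrow> (\<Prod>i\<in>I - S'. x i) * ((\<Prod>i\<in>U. 1 - x i) * (\<Prod>i\<in>S' - U. x i)) = (\<Prod>i\<in>U. 1 - x i) * (\<Prod>i\<in>I - U. x i)"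
      by (metis mult.left_commute)
    then show ?thesis unfolding sum_distrib_left by (rule sum.cong[OF refl])
  qed
  also have "Pow S' = {U\<in>Pow I. nu k ` U \<subseteq> S}" unfolding S'_def I_def by auto
  also have "(\<Sum>U\<in>{U\<in>Pow I. nu k ` U \<subseteq> S}. (\<Prod>i\<in>U. 1 - x i) * (\<Prod>i\<in>I - U. x i))
      = (\<Sum>U\<in>Pow I. if nu k ` U \<subseteq> S then (\<Prod>i\<in>U. 1 - x i) * (\<Prod>i\<in>I - U. x i) else 0)"
    using fI by (intro sum.inter_filter) simp
  finally show ?thesis unfolding x_def I_def .
qed

lemma sum_pert:
  fixes q :: "nat \<Rightarrow> real"
  assumes A: "finite A"
  shows "sum (q(0 := q 0 - t, Suc 0 := q (Suc 0) + t)) A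
       = sum q A - (if 0 \<in> A then t else 0) + (if Suc 0 \<in> A then t else 0)"
proof -
  have "\<And>i. (q(0 := q 0 - t, Suc 0 := q (Suc 0) + t)) i = q i + ((if i = Suc 0 then t else 0) - (if i = 0 then t else 0))"
    by auto
  then have "sum (q(0 := q 0 - t, Suc 0 := q (Suc 0) + t)) A = sum q A + ((\<Sum>i\<in>A. if i = Suc 0 then t else 0) - (\<Sum>i\<in>A. if i = 0 then t else 0))"
    by (simp add: sum.distrib sum_subtractf)
  then show ?thesis using A by simp
qed



theorem theorem2:
  fixes \<kappa> n :: nat and \<epsilon> :: real and q :: "nat \<Rightarrow> real"
  assumes "\<kappa> \<ge> 1" and "n \<ge> 1" and "0 < \<epsilon>" and "\<epsilon> < 1"
    and "local_min_on \<kappa> (loss \<kappa> n \<epsilon>) (simplexC \<kappa>) q"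
  shows "q 0 = 0"
proof (rule ccontr)
  assume q0: "q 0 \<noteq> 0"
  note k = assms(1) and e = assms(3,4)
  have qC: "q \<in> simplexC \<kappa>" and loc: "\<exists>r>0. \<forall>q'\<in>simplexC \<kappa>. (\<forall>i<2^\<kappa>. \<bar>q' i - q i\<bar> < r) \<longrightarrow> loss \<kappa> n \<epsilon> q \<le> loss \<kappa> n \<epsilon> q'"
    using assms(5) unfolding local_min_on_def by auto
  obtain r where r: "r > 0" "\<And>q'. q' \<in> simplexC \<kappa> \<Longrightarrow> (\<forall>i<2^\<kappa>. \<bar>q' i - q i\<bar> < r) \<Longrightarrow> loss \<kappa> n \<epsilon> q \<le> loss \<kappa> n \<epsilon> q'"
    using loc by blast
  have two: "(1::nat) < 2 ^ \<kappa>" using k by (metis one_less_numeral_iff one_less_power semiring_norm(76) less_le_trans zero_less_one le_numeral_extra(4)) 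
  have qnn: "\<And>i. i < 2^\<kappa> \<Longrightarrow> q i \<ge> 0" using qC unfolding simplexC_def by auto
  have q0pos: "q 0 > 0" using q0 qnn[of 0] by simp
  define t where "t = min (q 0) (r / 2)"
  have t: "t > 0" "t \<le> q 0" "t < r" using q0pos r unfolding t_def by auto
  define q' where "q' = q(0 := q 0 - t, Suc 0 := q (Suc 0) + t)"
  define v where "v = nu \<kappa> 1"
  have vW: "v \<in> Wsp \<kappa>" unfolding v_def by (rule nu_Wsp)
  have v0: "v \<noteq> vzero"
  proof
    assume "v = vzero"
    then have "v 0 = vzero 0" by simp
    then show False using k unfolding v_def nu_def vzero_def by (simp add: bit_0)
  qed
  have nu0: "nu \<kappa> 0 = vzero" unfolding nu_def vzero_def by simp
  have q'C: "q' \<in> simplexC \<kappa>"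
  proof -
    have "\<And>i. i < 2^\<kappa> \<Longrightarrow> q' i \<ge> 0" unfolding q'_def using qnn t two by auto
    moreover have "(\<Sum>i<2^\<kappa>. q' i) = 1"
      unfolding q'_def using sum_pert[of "{..<2^\<kappa>}" q t] qC two unfolding simplexC_def by simp
    ultimately show ?thesis unfolding simplexC_def by auto
  qed
  have close: "\<forall>i<2^\<kappa>. \<bar>q' i - q i\<bar> < r" unfolding q'_def using t r by auto
  have le: "loss \<kappa> n \<epsilon> q \<le> loss \<kappa> n \<epsilon> q'" using r(2)[OF q'C close] .
  define f where "f S = \<epsilon> powr (real n * (1 - zeta \<kappa> S q))" for S
  define A where "A = (\<Sum>S\<in>PS \<kappa>. Kc (\<kappa> - sdim S) * (if v \<notin> S then f S else 0))"
  define ee where "ee = \<epsilon> powr (real n * t)"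
  have f': "\<And>S. S \<in> PS \<kappa> \<Longrightarrow> \<epsilon> powr (real n * (1 - zeta \<kappa> S q')) = f S + (ee - 1) * (if v \<notin> S then f S else 0)"
  proof -
    fix S assume S: "S \<in> PS \<kappa>"
    have "vzero \<in> S" using S unfolding PS_def is_subspace_def by auto
    then have "0 \<in> {i. i < 2 ^ \<kappa> \<and> nu \<kappa> i \<in> S}" using nu0 by simp
    moreover have "Suc 0 \<in> {i. i < 2 ^ \<kappa> \<and> nu \<kappa> i \<in> S} \<longleftrightarrow> v \<in> S" using two unfolding v_def by simp
    ultimately have z: "zeta \<kappa> S q' = zeta \<kappa> S q - t + (if v \<in> S then t else 0)"
      unfolding zeta_def q'_def by (subst sum_pert) auto
    show "\<epsilon> powr (real n * (1 - zeta \<kappa> S q')) = f S + (ee - 1) * (if v \<notin> S then f S else 0)"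
    proof (cases "v \<in> S")
      case True then show ?thesis unfolding z f_def by simp
    next
      case False
      have "real n * (1 - zeta \<kappa> S q') = real n * (1 - zeta \<kappa> S q) + real n * t"
        unfolding z using False by (simp add: algebra_simps)
      then have "\<epsilon> powr (real n * (1 - zeta \<kappa> S q')) = f S * ee"
        unfolding f_def ee_def by (simp only: powr_add)
      then show ?thesis using False by (simp add: algebra_simps)
    qed
  qed
  have lossq: "loss \<kappa> n \<epsilon> p = real n * (1 - \<epsilon>) - real \<kappa> + (\<Sum>S\<in>PS \<kappa>. Kc (\<kappa> - sdim S) * \<epsilon> powr (real n * (1 - zeta \<kappa> S p)))" for p
    unfolding loss_def using G_lemma[where k=\<kappa> and h="\<lambda>S. \<epsilon> powr (real n * (1 - zeta \<kappa> S p))"] by simp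
  have "loss \<kappa> n \<epsilon> q' = loss \<kappa> n \<epsilon> q + (ee - 1) * A"
  proof -
    have "(\<Sum>S\<in>PS \<kappa>. Kc (\<kappa> - sdim S) * \<epsilon> powr (real n * (1 - zeta \<kappa> S q')))
        = (\<Sum>S\<in>PS \<kappa>. Kc (\<kappa> - sdim S) * f S + (ee - 1) * (Kc (\<kappa> - sdim S) * (if v \<notin> S then f S else 0)))"
    proof (rule sum.cong[OF refl])
      fix S assume S: "S \<in> PS \<kappa>"
      show "Kc (\<kappa> - sdim S) * \<epsilon> powr (real n * (1 - zeta \<kappa> S q')) = Kc (\<kappa> - sdim S) * f S + (ee - 1) * (Kc (\<kappa> - sdim S) * (if v \<notin> S then f S else 0))"
        unfolding f'[OF S] by (simp add: algebra_simps)
    qed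
    also have "\<dots> = (\<Sum>S\<in>PS \<kappa>. Kc (\<kappa> - sdim S) * f S) + (ee - 1) * A"
      unfolding A_def by (simp add: sum.distrib sum_distrib_left)
    finally show ?thesis unfolding lossq f_def by simp
  qed
  moreover have "A > 0"
    unfolding A_def
  proof (rule positivity[OF vW v0 _ _ nu_Wsp])
    show "finite {..<(2::nat) ^ \<kappa>}" by simp
    fix i show "0 < \<epsilon> powr (real n * q i) \<and> \<epsilon> powr (real n * q i) \<le> 1" if "i \<in> {..<2 ^ \<kappa>}"
      using that qnn[of i] e by (auto intro: powr_le1)
  next
    fix S show "f S = (\<Sum>U\<in>Pow {..<2 ^ \<kappa>}. if nu \<kappa> ` U \<subseteq> S then (\<Prod>i\<in>U. 1 - \<epsilon> powr (real n * q i)) * (\<Prod>i\<in>{..<2 ^ \<kappa>} - U. \<epsilon> powr (real n * q i)) else 0)"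
      unfolding f_def by (rule fexpand[OF qC e(1)])
  qed
  moreover have "ee < 1"
  proof -
    have "ee < 1 powr (real n * t)" unfolding ee_def
      using assms(2) t e by (intro powr_less_mono2) auto
    then show ?thesis by simp
  qed
  ultimately have "loss \<kappa> n \<epsilon> q' < loss \<kappa> n \<epsilon> q"
    by (simp add: mult_neg_pos)
  then show False using le by simp
qed

end
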